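(* For every integer $n\ge1$, \[ \sum_{k=1}^{n}k\,\omega(n-k)=\sum_{\substack{m+k=n\\ m\ge1,\ k\ge0}}\phi(m)\,\Omega_m(k), \] where $\phi$ is Euler's totient function.
   Context: $\omega:\mathbb{Z}\to\mathbb{Z}$ is defined by $\omega(0)=1$; $\omega(m)=(-1)^j$ if $m=\frac{3j^2\pm j}{2}$ for some integer $j\ge1$; $\omega(m)=0$ otherwise (in particular for $m<0$). For $m\ge1$ and integer $k$, $\Omega_m(k)=\sum_{j\ge0}\omega(k-jm)=\omega(k)+\omega(k-m)+\omega(k-2m)+\cdots$. *)

theory Defs
  imports "HOL-Number_Theory.Number_Theory"
begin

definition pent_omega :: "int \<Rightarrow> int" where
  "pent_omega m =
     (if m = 0 then 1
      else if (\<exists>j::int. j \<ge> 1 \<and> (2 * m = 3 * j^2 + j \<or> 2 * m = 3 * j^2 - j))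
      then (-1) ^ nat (THE j::int. j \<ge> 1 \<and> (2 * m = 3 * j^2 + j \<or> 2 * m = 3 * j^2 - j))
      else 0)"

text \<open>Omega_m(k) = sum over j >= 0 of omega(k - j m); only the finitely many j with
  k - j m >= 0 contribute, since omega vanishes on negative integers.\<close>
definition Omega_sum :: "nat \<Rightarrow> int \<Rightarrow> int" where
  "Omega_sum m k = (\<Sum>j\<in>{j::nat. int j * int m \<le> k}. pent_omega (k - int j * int m))"

end

theory Submission
  imports Defs
begin

lemma divsum_restr:
  assumes "t \<in> {1..(n::nat)}"
  shows "(\<Sum>m\<in>{m\<in>{1..n}. m dvd t}. totient m) = t"
proof -
  have "{m\<in>{1..n}. m dvd t} = {d. d dvd t}"
    using assms by (auto dest: dvd_imp_le)
  then show ?thesis using totient_divisor_sum[of t] by simp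
qed

lemma inner_eq:
  assumes m: "m \<in> {1..(n::nat)}"
  shows "(\<Sum>t\<in>{t\<in>{1..n}. m dvd t}. pent_omega (int n - int t)) = Omega_sum m (int n - int m)"
proof -
  have mpos: "m \<ge> 1" "m \<le> n" using m by auto
  show ?thesis
    unfolding Omega_sum_def
  proof (rule sum.reindex_bij_witness[where i = "\<lambda>j. m + j * m" and j = "\<lambda>t. t div m - 1"])
    fix j assume "j \<in> {j::nat. int j * int m \<le> int n - int m}"
    then have h: "int j * int m \<le> int n - int m" by simp
    then have "int (j * m + m) \<le> int n" by simp
    then have "j * m + m \<le> n" by linarith
    then show "m + j * m \<in> {t \<in> {1..n}. m dvd t}" using mpos by auto
    have "(m + j * m) div m = j + 1" using mpos
    proof -
      have "m + j * m = (j + 1) * m" by simp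
      then show ?thesis using mpos by simp
    qed
    then show "(m + j * m) div m - 1 = j" by simp
  next
    fix t assume "t \<in> {t \<in> {1..n}. m dvd t}"
    then obtain q where q: "t = m * q" "1 \<le> t" "t \<le> n" by auto
    then have "q \<ge> 1" by (cases q) auto
    have d: "t div m = q" using q mpos by simp
    show "m + (t div m - 1) * m = t" using d q \<open>q \<ge> 1\<close>
    proof -
      obtain r where "q = Suc r" using \<open>q \<ge> 1\<close> by (cases q) auto
      then show ?thesis using d q by simp
    qed
    have "int (q - 1) * int m \<le> int n - int m" using q \<open>q \<ge> 1\<close>
      by (simp add: of_nat_diff algebra_simps flip: of_nat_mult)
    then show "t div m - 1 \<in> {j::nat. int j * int m \<le> int n - int m}" using d by simp
    show "pent_omega (int n - int m - int (t div m - 1) * int m) = pent_omega (int n - int t)"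
      using d q \<open>q \<ge> 1\<close> by (simp add: of_nat_diff algebra_simps)
  qed
qed

theorem mainTheorem6:
  fixes n :: nat
  assumes "n \<ge> 1"
  shows "(\<Sum>k=1..n. int k * pent_omega (int n - int k)) =
         (\<Sum>m=1..n. int (totient m) * Omega_sum m (int n - int m))"
proof -
  have "(\<Sum>k=1..n. int k * pent_omega (int n - int k))
      = (\<Sum>k\<in>{1..n}. \<Sum>m\<in>{m\<in>{1..n}. m dvd k}. int (totient m) * pent_omega (int n - int k))"
  proof (rule sum.cong[OF refl])
    fix k assume k: "k \<in> {1..n}"
    have "(\<Sum>m\<in>{m\<in>{1..n}. m dvd k}. int (totient m) * pent_omega (int n - int k))
       = int (\<Sum>m\<in>{m\<in>{1..n}. m dvd k}. totient m) * pent_omega (int n - int k)"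
      by (simp add: sum_distrib_right)
    also have "\<dots> = int k * pent_omega (int n - int k)" using divsum_restr[OF k] by simp
    finally show "int k * pent_omega (int n - int k) = (\<Sum>m\<in>{m\<in>{1..n}. m dvd k}. int (totient m) * pent_omega (int n - int k))" by simp
  qed
  also have "\<dots> = (\<Sum>m\<in>{1..n}. \<Sum>k\<in>{k\<in>{1..n}. m dvd k}. int (totient m) * pent_omega (int n - int k))"
    by (rule sum.swap_restrict) auto
  also have "\<dots> = (\<Sum>m\<in>{1..n}. int (totient m) * Omega_sum m (int n - int m))"
  proof (rule sum.cong[OF refl])
    fix m assume m: "m \<in> {1..n}"
    show "(\<Sum>k\<in>{k\<in>{1..n}. m dvd k}. int (totient m) * pent_omega (int n - int k)) = int (totient m) * Omega_sum m (int n - int m)"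
      unfolding sum_distrib_left[symmetric] inner_eq[OF m] ..
  qed
  finally show ?thesis .
qed

end
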